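(* The mixed dual estimate $\check{\Sigma}$ in the model $B(\check G) \cap M(G)$ is identical to the mixed dual estimate in the model ${\rm M}_+(G)=A(G)\cap M(G)$.
   Context: Let $G=(V,E)$ be an undirected graph on $V=\{1,\ldots,d\}$, $S$ a sample covariance matrix, $M(G)$ the Gaussian graphical model ($(\Sigma^{-1})_{ij}=0$ for $ij\notin E$), $A(G)$ the set of positive definite $\Sigma$ with $\Sigma_{ij}\ge 0$ for $ij\in E$, and ${\rm M}_+(G)=A(G)\cap M(G)$. Let $\widehat K$ be the MLE of $K=\Sigma^{-1}$ in $M(G)$, and let $\check\Sigma$ (the mixed dual estimate in ${\rm M}_+(G)$) be the minimizer of $-\log\det\Sigma+\operatorname{tr}(\Sigma\widehat K)$ over positive definite $\Sigma$ with $\Sigma_{ij}\geq 0$ for $ij\in E(G)$. Let $\check G$ be the graph whose edges are the pairs $ij$ with $\check\Sigma_{ij}\neq 0$. For a graph $H$, $B(H)$ denotes the covariance graph model of all covariance matrices with $\Sigma_{ij}=0$ for $ij\notin E(H)$. The mixed dual estimate in $B(\check G)\cap M(G)$ is obtained by first computing $\widehat K$ in $M(G)$ and then computing the dual likelihood estimate in $B(\check G)$ based on $\widehat K$ (minimizing $-\log\det\Sigma+\operatorname{tr}(\Sigma\widehat K)$ over $\Sigma\in B(\check G)$). *)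

theory Defs
  imports "HOL-Analysis.Analysis"
begin

text \<open>Vertices are the elements of a finite type 'n (playing the role of V = {1..d}).
  A graph is a symmetric, irreflexive edge relation E on 'n.\<close>

definition simple_graph :: "('n \<Rightarrow> 'n \<Rightarrow> bool) \<Rightarrow> bool" where
  "simple_graph E \<longleftrightarrow> (\<forall>i j. E i j \<longrightarrow> E j i) \<and> (\<forall>i. \<not> E i i)"

definition pos_def :: "real^'n^'n \<Rightarrow> bool" where
  "pos_def A \<longleftrightarrow> transpose A = A \<and> (\<forall>x. x \<noteq> 0 \<longrightarrow> x \<bullet> (A *v x) > 0)"

definition pos_semidef :: "real^'n^'n \<Rightarrow> bool" where
  "pos_semidef A \<longleftrightarrow> transpose A = A \<and> (\<forall>x. x \<bullet> (A *v x) \<ge> 0)"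

text \<open>Precision matrices K = Sigma^{-1} of the Gaussian graphical model M(G).\<close>
definition M_prec :: "('n \<Rightarrow> 'n \<Rightarrow> bool) \<Rightarrow> real^'n^'n \<Rightarrow> bool" where
  "M_prec E K \<longleftrightarrow> pos_def K \<and> (\<forall>i j. i \<noteq> j \<and> \<not> E i j \<longrightarrow> K $ i $ j = 0)"

definition A_model :: "('n \<Rightarrow> 'n \<Rightarrow> bool) \<Rightarrow> real^'n^'n \<Rightarrow> bool" where
  "A_model E S \<longleftrightarrow> pos_def S \<and> (\<forall>i j. E i j \<longrightarrow> S $ i $ j \<ge> 0)"

definition B_model :: "('n \<Rightarrow> 'n \<Rightarrow> bool) \<Rightarrow> real^'n^'n \<Rightarrow> bool" where
  "B_model H S \<longleftrightarrow> pos_def S \<and> (\<forall>i j. i \<noteq> j \<and> \<not> H i j \<longrightarrow> S $ i $ j = 0)"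

text \<open>Gaussian log-likelihood (up to constants and factor n/2) of K given S.\<close>
definition gauss_loglik :: "real^'n^'n \<Rightarrow> real^'n^'n \<Rightarrow> real" where
  "gauss_loglik S K = ln (det K) - trace (S ** K)"

definition is_MLE :: "('n \<Rightarrow> 'n \<Rightarrow> bool) \<Rightarrow> real^'n^'n \<Rightarrow> real^'n^'n \<Rightarrow> bool" where
  "is_MLE E S K \<longleftrightarrow> M_prec E K \<and> (\<forall>K'. M_prec E K' \<longrightarrow> gauss_loglik S K' \<le> gauss_loglik S K)"

definition dual_obj :: "real^'n^'n \<Rightarrow> real^'n^'n \<Rightarrow> real" where
  "dual_obj K S = - ln (det S) + trace (S ** K)"

definition is_dual_est :: "(real^'n^'n \<Rightarrow> bool) \<Rightarrow> real^'n^'n \<Rightarrow> real^'n^'n \<Rightarrow> bool" where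
  "is_dual_est C K S \<longleftrightarrow> C S \<and> (\<forall>S'. C S' \<longrightarrow> dual_obj K S \<le> dual_obj K S')"

definition supp_graph :: "real^'n^'n \<Rightarrow> 'n \<Rightarrow> 'n \<Rightarrow> bool" where
  "supp_graph S i j \<longleftrightarrow> i \<noteq> j \<and> S $ i $ j \<noteq> 0"

end

theory Submission
  imports Defs
begin

lemma sym_dot:
  fixes X :: "real^'n^'n"
  assumes "transpose X = X"
  shows "(X *v x) \<bullet> y = x \<bullet> (X *v y)"
  by (metis assms dot_lmul_matrix vector_transpose_matrix)

lemma quad_expand:
  fixes A :: "real^'n^'n"
  assumes "transpose A = A"
  shows "(u + t *\<^sub>R w) \<bullet> (A *v (u + t *\<^sub>R w)) = u \<bullet> (A *v u) + 2 * t * (w \<bullet> (A *v u)) + t^2 * (w \<bullet> (A *v w))"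
proof -
  have "u \<bullet> (A *v w) = w \<bullet> (A *v u)"
    by (metis assms sym_dot inner_commute)
  then show ?thesis
    by (simp add: matrix_vector_right_distrib matrix_vector_mult_scaleR inner_add_left inner_add_right
        algebra_simps power2_eq_square)
qed

lemma diag_step:
  fixes X Y :: "real^'n^'n" and I :: "'n set"
  assumes pdX: "pos_def X" and symY: "transpose Y = Y" and kI: "k \<notin> I"
    and orth: "\<forall>i\<in>I. \<forall>j\<in>I. r i \<bullet> (X *v r j) = (if i = j then 1 else 0)"
    and eig: "\<forall>i\<in>I. Y *v r i = lam i *\<^sub>R (X *v r i)"
  shows "\<exists>u \<mu>. u \<bullet> (X *v u) = 1 \<and> (\<forall>i\<in>I. r i \<bullet> (X *v u) = 0) \<and> Y *v u = \<mu> *\<^sub>R (X *v u)"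
proof -
  have symX: "transpose X = X" and posX: "\<And>x. x \<noteq> 0 \<Longrightarrow> x \<bullet> (X *v x) > 0"
    using pdX unfolding pos_def_def by auto
  define W where "W = {v. \<forall>i\<in>I. r i \<bullet> (X *v v) = 0}"
  have subW: "subspace W"
    unfolding subspace_def W_def
    by (simp add: matrix_vector_right_distrib matrix_vector_mult_scaleR inner_add_right)
  define S where "S = (\<lambda>i. X *v r i) ` I"
  have "card S \<le> card I" unfolding S_def by (rule card_image_le) simp
  also have "card I < card (UNIV :: 'n set)"
    using kI by (intro psubset_card_mono) auto
  finally have "card S < CARD('n)" .
  moreover have "finite S" unfolding S_def by simp
  ultimately have "dim S < DIM(real^'n)"
    using real_vector.dim_le_card'[of S] by simp
  then obtain v0 where v0: "v0 \<noteq> 0" "\<And>y. y \<in> span S \<Longrightarrow> orthogonal v0 y"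
    using orthogonal_to_subspace_exists by blast
  have v0W: "v0 \<in> W"
  proof -
    have "r i \<bullet> (X *v v0) = 0" if "i \<in> I" for i
    proof -
      have "X *v r i \<in> span S" using that unfolding S_def by (intro span_base) auto
      then have "v0 \<bullet> (X *v r i) = 0" using v0(2) orthogonal_def by blast
      then show ?thesis by (metis symX sym_dot inner_commute)
    qed
    then show ?thesis unfolding W_def by auto
  qed
  define Sph where "Sph = sphere (0::real^'n) 1 \<inter> W"
  have cS: "compact Sph" unfolding Sph_def
    by (intro compact_Int_closed compact_sphere closed_subspace subW)
  have v0S: "(1 / norm v0) *\<^sub>R v0 \<in> Sph"
    unfolding Sph_def using v0 v0W subW by (auto simp: subspace_scale)
  define \<rho> where "\<rho> = (\<lambda>v. (v \<bullet> (Y *v v)) / (v \<bullet> (X *v v)))"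
  have pos_on: "v \<bullet> (X *v v) > 0" if "v \<in> Sph" for v
  proof -
    have "v \<noteq> 0" using that unfolding Sph_def by auto
    then show ?thesis using posX by blast
  qed
  have "continuous_on Sph \<rho>"
    unfolding \<rho>_def
    apply (intro continuous_intros matrix_vector_mult_linear_continuous_on[THEN continuous_on_compose2[where f="\<lambda>x. x"]])
    using pos_on by (auto intro: matrix_vector_mult_linear_continuous_on) (metis less_irrefl)
  then obtain u0 where u0S: "u0 \<in> Sph" and u0max: "\<And>v. v \<in> Sph \<Longrightarrow> \<rho> v \<le> \<rho> u0"
    using continuous_attains_sup[OF cS _] v0S by blast
  define \<mu> where "\<mu> = \<rho> u0"
  have u0W: "u0 \<in> W" and u0nz: "u0 \<noteq> 0" using u0S unfolding Sph_def by auto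
  have c0: "u0 \<bullet> (X *v u0) > 0" using pos_on u0S .
  have le: "w \<bullet> (Y *v w) \<le> \<mu> * (w \<bullet> (X *v w))" if wW: "w \<in> W" for w
  proof (cases "w = 0")
    case True then show ?thesis by simp
  next
    case False
    define c where "c = 1 / norm w"
    have cpos: "c > 0" using False unfolding c_def by simp
    have "c *\<^sub>R w \<in> Sph" unfolding Sph_def c_def using False wW subW
      by (auto simp: subspace_scale)
    then have "\<rho> (c *\<^sub>R w) \<le> \<mu>" using u0max unfolding \<mu>_def by blast
    moreover have "\<rho> (c *\<^sub>R w) = \<rho> w"
      unfolding \<rho>_def using cpos by (simp add: matrix_vector_mult_scaleR)
    moreover have "w \<bullet> (X *v w) > 0" using posX False by blast
    ultimately show ?thesis unfolding \<rho>_def by (simp add: pos_divide_le_eq)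
  qed
  have q0: "u0 \<bullet> (Y *v u0) = \<mu> * (u0 \<bullet> (X *v u0))"
    unfolding \<mu>_def \<rho>_def using c0 by simp
  define z where "z = \<mu> *\<^sub>R (X *v u0) - Y *v u0"
  have zW: "w \<bullet> z = 0" if wW: "w \<in> W" for w
  proof -
    define B where "B = w \<bullet> z"
    define q where "q = \<mu> * (w \<bullet> (X *v w)) - w \<bullet> (Y *v w)"
    have qnn: "q \<ge> 0" using le[OF wW] unfolding q_def by simp
    have B_eq: "B = \<mu> * (w \<bullet> (X *v u0)) - w \<bullet> (Y *v u0)"
      unfolding B_def z_def by (simp add: inner_diff_right)
    have "0 \<le> 2 * t * B + t^2 * q" for t
    proof -
      have "u0 + t *\<^sub>R w \<in> W" using subW u0W wW by (simp add: subspace_add subspace_scale)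
      from le[OF this] show ?thesis
        unfolding quad_expand[OF symX] quad_expand[OF symY] B_eq q_def using q0
        by (simp add: algebra_simps)
    qed
    define d where "d = q + 1"
    have dpos: "d > 0" using qnn unfolding d_def by simp
    define t where "t = - B / d"
    have td: "t * d = - B" unfolding t_def using dpos by simp
    have "0 \<le> d^2 * (2 * t * B + t^2 * q)" using \<open>\<And>t. 0 \<le> 2 * t * B + t^2 * q\<close>[of t] by (intro mult_nonneg_nonneg) auto
    also have "d^2 * (2 * t * B + t^2 * q) = 2 * d * (t * d) * B + (t * d)^2 * q"
      by (simp add: algebra_simps power2_eq_square)
    also have "\<dots> = 2 * d * (- B) * B + (- B)^2 * q" by (simp only: td)
    also have "\<dots> = - (B^2 * (q + 2))" unfolding d_def power2_eq_square by algebra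
    finally have "B^2 * (q + 2) \<le> 0" by simp
    moreover have "q + 2 > 0" using qnn by auto
    ultimately have "B^2 \<le> 0" by (simp add: mult_le_0_iff)
    then show ?thesis unfolding B_def by simp
  qed
  have zr: "z \<bullet> r i = 0" if "i \<in> I" for i
  proof -
    have "u0 \<bullet> (X *v r i) = (X *v u0) \<bullet> r i" by (simp only: sym_dot[OF symX])
    also have "\<dots> = r i \<bullet> (X *v u0)" by (rule inner_commute)
    also have "\<dots> = 0" using u0W that unfolding W_def by blast
    finally have a: "u0 \<bullet> (X *v r i) = 0" .
    have "z \<bullet> r i = \<mu> * ((X *v u0) \<bullet> r i) - (Y *v u0) \<bullet> r i"
      unfolding z_def by (simp add: inner_diff_left)
    also have "\<dots> = \<mu> * (u0 \<bullet> (X *v r i)) - u0 \<bullet> (Y *v r i)"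
      by (simp only: sym_dot[OF symX] sym_dot[OF symY])
    also have "\<dots> = 0" using a eig that by (simp add: matrix_vector_mult_scaleR)
    finally show ?thesis .
  qed
  define p where "p = (\<Sum>i\<in>I. (r i \<bullet> (X *v z)) *\<^sub>R r i)"
  have "z - p \<in> W"
  proof -
    have "r j \<bullet> (X *v (z - p)) = 0" if "j \<in> I" for j
    proof -
      have "r j \<bullet> (X *v p) = (\<Sum>i\<in>I. (r i \<bullet> (X *v z)) * (r j \<bullet> (X *v r i)))"
        unfolding p_def by (simp add: vec.sum matrix_vector_mult_scaleR inner_sum_right)
      also have "\<dots> = (\<Sum>i\<in>I. if i = j then r i \<bullet> (X *v z) else 0)"
        using orth that by (intro sum.cong) auto
      also have "\<dots> = r j \<bullet> (X *v z)" using that by simp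
      finally show ?thesis by (simp add: matrix_vector_mult_diff_distrib inner_diff_right)
    qed
    then show ?thesis unfolding W_def by auto
  qed
  then have "(z - p) \<bullet> z = 0" using zW by blast
  moreover have "p \<bullet> z = 0"
  proof -
    have "z \<bullet> p = 0" unfolding p_def using zr by (simp add: inner_sum_right)
    then show ?thesis by (simp add: inner_commute)
  qed
  ultimately have "z \<bullet> z = 0" by (simp add: inner_diff_left)
  then have z0: "z = 0" by simp
  then have Yu0: "Y *v u0 = \<mu> *\<^sub>R (X *v u0)" unfolding z_def by simp
  define u where "u = (1 / sqrt (u0 \<bullet> (X *v u0))) *\<^sub>R u0"
  have "u \<bullet> (X *v u) = 1"
    unfolding u_def using c0 by (simp add: matrix_vector_mult_scaleR power2_eq_square[symmetric])
  moreover have "\<forall>i\<in>I. r i \<bullet> (X *v u) = 0"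
    using u0W unfolding u_def W_def by (simp add: matrix_vector_mult_scaleR)
  moreover have "Y *v u = \<mu> *\<^sub>R (X *v u)"
    unfolding u_def by (simp add: matrix_vector_mult_scaleR Yu0)
  ultimately show ?thesis by blast
qed

lemma simul_diag:
  fixes X Y :: "real^'n^'n"
  assumes pdX: "pos_def X" and symY: "transpose Y = Y"
  shows "\<exists>(r :: 'n \<Rightarrow> real^'n) lam. (\<forall>i j. r i \<bullet> (X *v r j) = (if i = j then 1 else 0)) \<and> (\<forall>i. Y *v r i = lam i *\<^sub>R (X *v r i))"
proof -
  have symX: "transpose X = X" using pdX unfolding pos_def_def by auto
  have "\<exists>r lam. (\<forall>i\<in>I. \<forall>j\<in>I. r i \<bullet> (X *v r j) = (if i = j then 1 else 0)) \<and> (\<forall>i\<in>I. Y *v r i = lam i *\<^sub>R (X *v r i))"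
    if "finite I" for I :: "'n set"
    using that
  proof (induction I rule: finite_induct)
    case empty show ?case by auto
  next
    case (insert k I)
    then obtain r lam where orth: "\<forall>i\<in>I. \<forall>j\<in>I. r i \<bullet> (X *v r j) = (if i = j then 1 else 0)"
      and eig: "\<forall>i\<in>I. Y *v r i = lam i *\<^sub>R (X *v r i)" by blast
    from diag_step[OF pdX symY insert(2) orth eig] obtain u \<mu> where
      u1: "u \<bullet> (X *v u) = 1" and u2: "\<forall>i\<in>I. r i \<bullet> (X *v u) = 0" and u3: "Y *v u = \<mu> *\<^sub>R (X *v u)"
      by blast
    have u2': "u \<bullet> (X *v r i) = 0" if "i \<in> I" for i
    proof -
      have "u \<bullet> (X *v r i) = (X *v u) \<bullet> r i" by (simp only: sym_dot[OF symX])
      also have "\<dots> = r i \<bullet> (X *v u)" by (rule inner_commute)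
      finally show ?thesis using u2 that by simp
    qed
    define r' where "r' = r(k := u)"
    define lam' where "lam' = lam(k := \<mu>)"
    have "\<forall>i\<in>insert k I. \<forall>j\<in>insert k I. r' i \<bullet> (X *v r' j) = (if i = j then 1 else 0)"
      unfolding r'_def using orth u1 u2 u2' insert(2) by auto
    moreover have "\<forall>i\<in>insert k I. Y *v r' i = lam' i *\<^sub>R (X *v r' i)"
      unfolding r'_def lam'_def using eig u3 insert(2) by auto
    ultimately show ?case by blast
  qed
  from this[OF finite_class.finite_UNIV] show ?thesis by (simp only: ball_UNIV)
qed

lemma congr_entry:
  fixes A :: "real^'n^'n" and r :: "'n \<Rightarrow> real^'n"
  shows "(transpose (\<chi> i j. r j $ i) ** A ** (\<chi> i j. r j $ i)) $ i $ j = r i \<bullet> (A *v r j)"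
  apply (simp add: matrix_matrix_mult_def matrix_vector_mult_def transpose_def inner_vec_def
      sum_distrib_left sum_distrib_right mult.assoc mult.left_commute)
  apply (rule sum.swap)
  done


lemma ln_strict: "0 < (x::real) \<Longrightarrow> x \<noteq> 1 \<Longrightarrow> ln x < x - 1"
proof -
  assume x: "0 < x" "x \<noteq> 1"
  have s: "sqrt x > 0" "sqrt x \<noteq> 1" using x by auto
  have "ln x = 2 * ln (sqrt x)" using x by (simp add: ln_sqrt)
  also have "\<dots> \<le> 2 * (sqrt x - 1)" using ln_le_minus_one[OF s(1)] by simp
  also have "\<dots> < x - 1"
  proof -
    have "(sqrt x - 1)^2 > 0" using s by simp
    then show ?thesis using x by (simp add: power2_eq_square algebra_simps)
  qed
  finally show ?thesis .
qed

lemma key: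
  fixes X Y :: "real^'n^'n"
  assumes pdX: "pos_def X" and pdY: "pos_def Y"
  shows "matrix_inv X ** X = mat 1 \<and>
    ln (det Y) - ln (det X) \<le> trace (matrix_inv X ** Y) - real CARD('n) \<and>
    (Y \<noteq> X \<longrightarrow> ln (det Y) - ln (det X) < trace (matrix_inv X ** Y) - real CARD('n))"
proof -
  have symY: "transpose Y = Y" and posY: "\<And>x. x \<noteq> 0 \<Longrightarrow> x \<bullet> (Y *v x) > 0"
    using pdY unfolding pos_def_def by auto
  obtain r :: "'n \<Rightarrow> real^'n" and lam where
    orth: "\<And>i j. r i \<bullet> (X *v r j) = (if i = j then 1 else 0)" and
    eig: "\<And>i. Y *v r i = lam i *\<^sub>R (X *v r i)"
    using simul_diag[OF pdX symY] by blast
  define R :: "real^'n^'n" where "R = (\<chi> i j. r j $ i)"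
  define D :: "real^'n^'n" where "D = (\<chi> i j. if i = j then lam i else 0)"
  have hX: "transpose R ** X ** R = mat 1"
    unfolding R_def by (simp add: vec_eq_iff congr_entry orth mat_def)
  have hY: "transpose R ** Y ** R = D"
    unfolding R_def D_def by (simp add: vec_eq_iff congr_entry eig orth)
  have lampos: "lam i > 0" for i
  proof -
    have "r i \<noteq> 0" using orth[of i i] by auto
    then have "r i \<bullet> (Y *v r i) > 0" using posY by blast
    then show ?thesis using eig[of i] orth[of i i] by simp
  qed
  define M where "M = R ** transpose R"
  have "R ** (transpose R ** X) = mat 1"
    using hX matrix_left_right_inverse by (metis matrix_mul_assoc)
  then have MX: "M ** X = mat 1" unfolding M_def by (simp add: matrix_mul_assoc)
  then have XM: "X ** M = mat 1" using matrix_left_right_inverse by blast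
  have inv: "X ** matrix_inv X = mat 1 \<and> matrix_inv X ** X = mat 1"
    unfolding matrix_inv_def by (rule someI[of _ M]) (use MX XM in auto)
  have Minv: "matrix_inv X = M"
  proof -
    have "M = M ** (X ** matrix_inv X)" using inv by simp
    also have "\<dots> = matrix_inv X" by (simp only: matrix_mul_assoc MX matrix_mul_lid)
    finally show ?thesis by simp
  qed
  define d where "d = (det R)^2"
  have dX: "d * det X = 1"
  proof -
    have "det (transpose R ** X ** R) = 1" using hX by simp
    then show ?thesis unfolding d_def by (simp add: det_mul power2_eq_square algebra_simps)
  qed
  have dY: "d * det Y = (\<Prod>i\<in>UNIV. lam i)"
  proof -
    have "det (transpose R ** Y ** R) = det D" using hY by simp
    also have "det D = (\<Prod>i\<in>UNIV. lam i)" unfolding D_def by (subst det_diagonal) auto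
    finally show ?thesis unfolding d_def by (simp add: det_mul power2_eq_square algebra_simps)
  qed
  have dpos: "d > 0"
  proof -
    have "det R \<noteq> 0" using dX unfolding d_def by auto
    then show ?thesis unfolding d_def by simp
  qed
  have Ppos: "(\<Prod>i\<in>UNIV. lam i) > 0" using lampos by (simp add: prod_pos)
  have "ln (det Y) - ln (det X) = ln (\<Prod>i\<in>UNIV. lam i)"
  proof -
    have "det X = 1 / d" "det Y = (\<Prod>i\<in>UNIV. lam i) / d"
      using dX dY dpos by (auto simp: field_simps)
    then have "ln (det Y) = ln (\<Prod>i\<in>UNIV. lam i) - ln d" "ln (det X) = ln 1 - ln d"
      using ln_div[of "\<Prod>i\<in>UNIV. lam i" d] ln_div[of 1 d] dpos Ppos lampos[THEN less_imp_neq, symmetric] by simp_all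
    then show ?thesis by simp
  qed
  also have "\<dots> = (\<Sum>i\<in>UNIV. ln (lam i))" by (rule ln_prod) (auto simp: lampos[THEN less_imp_neq, symmetric])
  finally have lhs: "ln (det Y) - ln (det X) = (\<Sum>i\<in>UNIV. ln (lam i))" .
  have "trace (matrix_inv X ** Y) = trace (R ** (transpose R ** Y))"
    unfolding Minv M_def by (simp only: matrix_mul_assoc)
  also have "\<dots> = trace ((transpose R ** Y) ** R)" by (rule trace_mul_sym)
  also have "\<dots> = (\<Sum>i\<in>UNIV. lam i)" unfolding hY D_def trace_def by simp
  finally have tr0: "trace (matrix_inv X ** Y) = (\<Sum>i\<in>UNIV. lam i)" .
  have "(\<Sum>i\<in>UNIV. lam i - 1) = (\<Sum>i\<in>UNIV. lam i) - real CARD('n)"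
    by (simp add: sum_subtractf)
  then have tr: "trace (matrix_inv X ** Y) - real CARD('n) = (\<Sum>i\<in>UNIV. lam i - 1)"
    using tr0 by simp
  have weak: "(\<Sum>i\<in>UNIV. ln (lam i)) \<le> (\<Sum>i\<in>UNIV. lam i - 1)"
    using lampos by (intro sum_mono ln_le_minus_one)
  have strict: "(\<Sum>i\<in>UNIV. ln (lam i)) < (\<Sum>i\<in>UNIV. lam i - 1)" if "Y \<noteq> X"
  proof -
    have "\<exists>i. lam i \<noteq> 1"
    proof (rule ccontr)
      assume "\<not> (\<exists>i. lam i \<noteq> 1)"
      then have "D = mat 1" unfolding D_def by (simp add: vec_eq_iff mat_def)
      then have "R ** (transpose R ** Y ** R) ** transpose R = M" unfolding hY M_def by simp
      then have "M ** Y ** M = M" unfolding M_def by (simp add: matrix_mul_assoc)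
      then have "X ** (M ** Y ** M) ** X = X ** M ** X" by simp
      then have "Y = X" by (simp add: matrix_mul_assoc XM) (simp add: matrix_mul_assoc[symmetric] XM MX)
      then show False using that by auto
    qed
    then obtain i where "lam i \<noteq> 1" by blast
    then show ?thesis using lampos
      by (intro sum_strict_mono_ex1) (auto intro: ln_le_minus_one ln_strict)
  qed
  show ?thesis using inv lhs tr weak strict by simp
qed


lemma trace_scaleR: "trace (c *\<^sub>R (A::real^'n^'n)) = c * trace A"
  by (simp add: trace_def sum_distrib_left)

lemma comb_entry: "((a::real) *\<^sub>R (A::real^'n^'n) + b *\<^sub>R B) $ i $ j = a * A $ i $ j + b * B $ i $ j"
  by simp

lemma pd_comb:
  fixes X Y :: "real^'n^'n"
  assumes pdX: "pos_def X" and pdY: "pos_def Y" and t: "0 \<le> t" "t \<le> 1"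
  shows "pos_def ((1 - t) *\<^sub>R X + t *\<^sub>R Y)"
proof -
  have sX: "transpose X = X" and pX: "\<And>x. x \<noteq> 0 \<Longrightarrow> x \<bullet> (X *v x) > 0"
    using pdX unfolding pos_def_def by auto
  have sY: "transpose Y = Y" and pY: "\<And>x. x \<noteq> 0 \<Longrightarrow> x \<bullet> (Y *v x) > 0"
    using pdY unfolding pos_def_def by auto
  have "transpose ((1 - t) *\<^sub>R X + t *\<^sub>R Y) = (1 - t) *\<^sub>R X + t *\<^sub>R Y"
  proof -
    have "transpose X $ i $ j = X $ i $ j" "transpose Y $ i $ j = Y $ i $ j" for i j
      using sX sY by simp_all
    then show ?thesis by (simp add: vec_eq_iff transpose_def)
  qed
  moreover have "x \<bullet> (((1 - t) *\<^sub>R X + t *\<^sub>R Y) *v x) > 0" if "x \<noteq> 0" for x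
  proof -
    have e: "x \<bullet> (((1 - t) *\<^sub>R X + t *\<^sub>R Y) *v x) = (1 - t) * (x \<bullet> (X *v x)) + t * (x \<bullet> (Y *v x))"
      by (simp add: matrix_vector_mult_add_rdistrib scaleR_matrix_vector_assoc[symmetric] inner_add_right)
    have p1: "x \<bullet> (X *v x) > 0" "x \<bullet> (Y *v x) > 0" using pX pY that by auto
    show ?thesis
    proof (cases "t < 1")
      case True
      then have "(1 - t) * (x \<bullet> (X *v x)) > 0" using p1 by simp
      moreover have "t * (x \<bullet> (Y *v x)) \<ge> 0" using p1 t by simp
      ultimately show ?thesis unfolding e by linarith
    next
      case False
      then have "t = 1" using t by simp
      then show ?thesis unfolding e using p1 by simp
    qed
  qed
  ultimately show ?thesis unfolding pos_def_def by blast
qed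

lemma conv:
  fixes X Y K :: "real^'n^'n"
  assumes pdX: "pos_def X" and pdY: "pos_def Y" and t: "0 \<le> t" "t \<le> 1"
  shows "dual_obj K ((1 - t) *\<^sub>R X + t *\<^sub>R Y) \<le> (1 - t) * dual_obj K X + t * dual_obj K Y \<and>
    (X \<noteq> Y \<and> 0 < t \<and> t < 1 \<longrightarrow> dual_obj K ((1 - t) *\<^sub>R X + t *\<^sub>R Y) < (1 - t) * dual_obj K X + t * dual_obj K Y)"
proof -
  define Z where "Z = (1 - t) *\<^sub>R X + t *\<^sub>R Y"
  have pdZ: "pos_def Z" unfolding Z_def using pd_comb[OF pdX pdY t] .
  define G where "G = matrix_inv Z"
  define n where "n = real CARD('n)"
  have kX: "G ** Z = mat 1 \<and> ln (det X) - ln (det Z) \<le> trace (G ** X) - n \<and>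
      (X \<noteq> Z \<longrightarrow> ln (det X) - ln (det Z) < trace (G ** X) - n)"
    using key[OF pdZ pdX] unfolding G_def n_def .
  have kY: "ln (det Y) - ln (det Z) \<le> trace (G ** Y) - n"
    using key[OF pdZ pdY] unfolding G_def n_def by blast
  have trGZ: "trace (G ** Z) = n" using kX trace_I unfolding n_def by simp
  have lin: "trace (G ** Z) = (1 - t) * trace (G ** X) + t * trace (G ** Y)"
    unfolding Z_def by (simp add: matrix_add_ldistrib matrix_scalar_ac scalar_matrix_assoc[symmetric] trace_add trace_scaleR)
  have linK: "trace (Z ** K) = (1 - t) * trace (X ** K) + t * trace (Y ** K)"
  proof -
    have "trace (Z ** K) = trace (K ** Z)" by (rule trace_mul_sym)
    also have "\<dots> = (1 - t) * trace (K ** X) + t * trace (K ** Y)"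
      unfolding Z_def by (simp add: matrix_add_ldistrib matrix_scalar_ac scalar_matrix_assoc[symmetric] trace_add trace_scaleR)
    also have "\<dots> = (1 - t) * trace (X ** K) + t * trace (Y ** K)"
      by (simp only: trace_mul_sym[of K X] trace_mul_sym[of K Y])
    finally show ?thesis .
  qed
  have main: "(1 - t) * (ln (det X) - ln (det Z)) + t * (ln (det Y) - ln (det Z)) \<le> 0"
  proof -
    have "(1 - t) * (ln (det X) - ln (det Z)) \<le> (1 - t) * (trace (G ** X) - n)"
      using kX t by (intro mult_left_mono) auto
    moreover have "t * (ln (det Y) - ln (det Z)) \<le> t * (trace (G ** Y) - n)"
      using kY t by (intro mult_left_mono) auto
    moreover have "(1 - t) * (trace (G ** X) - n) + t * (trace (G ** Y) - n) = 0"
      using lin trGZ by (simp add: algebra_simps)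
    ultimately show ?thesis by linarith
  qed
  have strict: "(1 - t) * (ln (det X) - ln (det Z)) + t * (ln (det Y) - ln (det Z)) < 0"
    if "X \<noteq> Y" "0 < t" "t < 1"
  proof -
    have "X \<noteq> Z"
    proof
      assume "X = Z"
      then have "t *\<^sub>R (Y - X) = 0" unfolding Z_def by (auto simp: algebra_simps)
      then show False using that by auto
    qed
    then have "(1 - t) * (ln (det X) - ln (det Z)) < (1 - t) * (trace (G ** X) - n)"
      using kX that by (intro mult_strict_left_mono) auto
    moreover have "t * (ln (det Y) - ln (det Z)) \<le> t * (trace (G ** Y) - n)"
      using kY t by (intro mult_left_mono) auto
    moreover have "(1 - t) * (trace (G ** X) - n) + t * (trace (G ** Y) - n) = 0"
      using lin trGZ by (simp add: algebra_simps)
    ultimately show ?thesis by linarith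
  qed
  have obj: "(1 - t) * dual_obj K X + t * dual_obj K Y - dual_obj K Z =
      - ((1 - t) * (ln (det X) - ln (det Z)) + t * (ln (det Y) - ln (det Z)))"
    unfolding dual_obj_def linK by (simp add: algebra_simps)
  show ?thesis using main strict obj unfolding Z_def[symmetric] by auto
qed


theorem corollary5p2:
  fixes E :: "'n::finite \<Rightarrow> 'n \<Rightarrow> bool"
    and S Khat Scheck :: "real^'n^'n"
  assumes "simple_graph E"
    and "pos_semidef S"
    and "is_MLE E S Khat"
    and "is_dual_est (A_model E) Khat Scheck"
  shows "is_dual_est (B_model (supp_graph Scheck)) Khat Scheck
       \<and> (\<forall>S'. is_dual_est (B_model (supp_graph Scheck)) Khat S' \<longrightarrow> S' = Scheck)"
proof -
  have irr: "\<And>i. \<not> E i i" using assms(1) unfolding simple_graph_def by auto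
  have AS: "A_model E Scheck" and optA: "\<And>S'. A_model E S' \<Longrightarrow> dual_obj Khat Scheck \<le> dual_obj Khat S'"
    using assms(4) unfolding is_dual_est_def by auto
  have pdS: "pos_def Scheck" and nnS: "\<And>i j. E i j \<Longrightarrow> Scheck $ i $ j \<ge> 0"
    using AS unfolding A_model_def by auto
  let ?C = "B_model (supp_graph Scheck)"
  define f where "f = dual_obj Khat"
  have CS: "?C Scheck" using pdS unfolding B_model_def supp_graph_def by auto
  have opt: "f Scheck \<le> f S'" if CS': "?C S'" for S'
  proof -
    have pdS': "pos_def S'" and zS': "\<And>i j. i \<noteq> j \<Longrightarrow> Scheck $ i $ j = 0 \<Longrightarrow> S' $ i $ j = 0"
      using CS' unfolding B_model_def supp_graph_def by auto
    define Zt where "Zt = (\<lambda>t::real. (1 - t) *\<^sub>R Scheck + t *\<^sub>R S')"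
    have ev: "eventually (\<lambda>t. \<forall>ij. E (fst ij) (snd ij) \<longrightarrow> Zt t $ fst ij $ snd ij \<ge> 0) (at_right 0)"
    proof (rule eventually_all_finite)
      fix ij :: "'n \<times> 'n"
      obtain i j where ij: "ij = (i, j)" by (cases ij)
      show "eventually (\<lambda>t. E (fst ij) (snd ij) \<longrightarrow> Zt t $ fst ij $ snd ij \<ge> 0) (at_right 0)"
      proof (cases "E i j")
        case False then show ?thesis unfolding ij by simp
      next
        case True
        then have ij_ne: "i \<noteq> j" using irr by auto
        show ?thesis
        proof (cases "Scheck $ i $ j = 0")
          case True
          then have "S' $ i $ j = 0" using zS' ij_ne by blast
          then show ?thesis unfolding ij Zt_def using True by simp
        next
          case False
          then have pos: "Scheck $ i $ j > 0" using nnS[OF \<open>E i j\<close>] by simp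
          have "((\<lambda>t. (1 - t) * Scheck $ i $ j + t * S' $ i $ j) \<longlongrightarrow>
                 (1 - 0) * Scheck $ i $ j + 0 * S' $ i $ j) (at_right 0)"
            by (intro tendsto_intros)
          then have "((\<lambda>t. (1 - t) * Scheck $ i $ j + t * S' $ i $ j) \<longlongrightarrow> Scheck $ i $ j) (at_right 0)"
            by simp
          from order_tendstoD(1)[OF this pos]
          have "eventually (\<lambda>t. 0 < (1 - t) * Scheck $ i $ j + t * S' $ i $ j) (at_right 0)" .
          then show ?thesis unfolding ij Zt_def
            by (rule eventually_mono) simp
        qed
      qed
    qed
    then obtain b where b: "b > 0" and hb: "\<And>y. y > 0 \<Longrightarrow> y < b \<Longrightarrow>
        (\<forall>ij. E (fst ij) (snd ij) \<longrightarrow> Zt y $ fst ij $ snd ij \<ge> 0)"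
      using eventually_at_right[of "0::real" 1] by auto
    define t where "t = min (b / 2) (1 / 2)"
    have t: "0 < t" "t < 1" "t < b" unfolding t_def using b by auto
    have "pos_def (Zt t)" unfolding Zt_def using pd_comb[OF pdS pdS'] t by simp
    moreover have "Zt t $ i $ j \<ge> 0" if "E i j" for i j
      using hb[OF t(1) t(3)] that by force
    ultimately have "A_model E (Zt t)" unfolding A_model_def by blast
    then have "f Scheck \<le> f (Zt t)" using optA unfolding f_def by blast
    also have "\<dots> \<le> (1 - t) * f Scheck + t * f S'"
      unfolding Zt_def f_def using conv[OF pdS pdS', of t Khat] t by simp
    finally have "t * f Scheck \<le> t * f S'" by (simp add: algebra_simps)
    then show ?thesis using t by simp
  qed
  have part1: "is_dual_est ?C Khat Scheck"
    unfolding is_dual_est_def using CS opt unfolding f_def by blast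
  have part2: "S' = Scheck" if "is_dual_est ?C Khat S'" for S'
  proof (rule ccontr)
    assume ne: "S' \<noteq> Scheck"
    have CS': "?C S'" and le: "f S' \<le> f Scheck"
      using that CS unfolding is_dual_est_def f_def by auto
    have pdS': "pos_def S'" and zS': "\<And>i j. i \<noteq> j \<Longrightarrow> \<not> supp_graph Scheck i j \<Longrightarrow> S' $ i $ j = 0"
      using CS' unfolding B_model_def by auto
    define Z where "Z = (1 - 1/2) *\<^sub>R Scheck + (1/2::real) *\<^sub>R S'"
    have "pos_def Z" unfolding Z_def using pd_comb[OF pdS pdS', of "1/2"] by simp
    moreover have "Z $ i $ j = 0" if "i \<noteq> j" "\<not> supp_graph Scheck i j" for i j
    proof -
      have "Scheck $ i $ j = 0" using that unfolding supp_graph_def by auto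
      then show ?thesis unfolding Z_def using zS'[OF that] by simp
    qed
    ultimately have "?C Z" unfolding B_model_def by blast
    then have "f Scheck \<le> f Z" using opt by blast
    moreover have "f Z < (1 - 1/2) * f Scheck + (1/2) * f S'"
      unfolding Z_def f_def using conv[OF pdS pdS', of "1/2" Khat] ne by auto
    ultimately show False using le by simp
  qed
  show ?thesis using part1 part2 by blast
qed

end
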